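(* For $k\in\mathbb{N}^*$ and $0\le r\le k-1$, in $P=\mathbb{Z}[x_1,\dots,x_k,y_1,\dots,y_k]$ we have \[\alpha(k-1,k)\beta(r+1,k)-\alpha(r,k)\beta(k,k)=(-1)^{r+1}y_ky_1\cdots y_r\,\alpha_{r+1}(k-r-2,k).\]
   Context: In $P$ indices are periodic: $x_{i+k}:=x_i$, $y_{i+k}:=y_i$. For $f\in P$ and $s\in\mathbb{N}$ the shift is $f_s:=f(x_{s+1},\dots,x_{s+k},y_{s+1},\dots,y_{s+k})$, and $\alpha_s(r,k):=(\alpha(r,k))_s$. Write $[r]=\{1,\dots,r\}$ ($\emptyset$ if $r\le0$) and $S+1=\{s+1:s\in S\}$. For $0\le r\le k$, $\alpha(r,k):=\sum_{S}\prod_{i\in S}y_i\prod_{j\in[r]\setminus(S\cup(S+1))}x_j$, summed over subsets $S\subseteq\{1,\dots,r-1\}$ with no two consecutive integers (so $\alpha(0,k)=1$); $\alpha(-1,k):=0$. Also $\beta(0,k)=\beta(1,k):=0$ and, for $2\le r\le k+1$, $\beta(r,k):=\sum_S y_k\prod_{i\in S}y_i\prod_{j\in\{2,\dots,r-1\}\setminus(S\cup(S+1))}x_j$, summed over subsets $S\subseteq\{2,\dots,r-2\}$ with no two consecutive integers. *)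

theory Defs
  imports Main
begin

text \<open>Polynomials in Z[x_1..x_k,y_1..y_k] are represented by their evaluations:
  the variables are given as functions x, y :: nat => 'a into an arbitrary
  commutative ring (only indices 1..k are used). An identity holding for all
  such evaluations is exactly the polynomial identity in P.\<close>

definition noncons :: "nat set \<Rightarrow> bool" where
  "noncons S \<longleftrightarrow> (\<forall>i\<in>S. Suc i \<notin> S)"

text \<open>Periodic extension of indices: x_{i+k} = x_i (index 0 means k).\<close>
definition per :: "nat \<Rightarrow> (nat \<Rightarrow> 'a) \<Rightarrow> nat \<Rightarrow> 'a" where
  "per k x i = x ((i + k - 1) mod k + 1)"

definition alpha0 :: "(nat \<Rightarrow> 'a::comm_ring_1) \<Rightarrow> (nat \<Rightarrow> 'a) \<Rightarrow> int \<Rightarrow> 'a" where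
  "alpha0 X Y r = (if r < 0 then 0 else
     (\<Sum>S\<in>{S. S \<subseteq> {1..<nat r} \<and> noncons S}.
        (\<Prod>i\<in>S. Y i) * (\<Prod>j\<in>{1..nat r} - (S \<union> Suc ` S). X j)))"

definition beta0 :: "nat \<Rightarrow> (nat \<Rightarrow> 'a::comm_ring_1) \<Rightarrow> (nat \<Rightarrow> 'a) \<Rightarrow> nat \<Rightarrow> 'a" where
  "beta0 k X Y r = (if r < 2 then 0 else
     (\<Sum>S\<in>{S. S \<subseteq> {2..r-2} \<and> noncons S}.
        Y k * (\<Prod>i\<in>S. Y i) * (\<Prod>j\<in>{2..r-1} - (S \<union> Suc ` S). X j)))"

definition alpha :: "nat \<Rightarrow> nat \<Rightarrow> (nat \<Rightarrow> 'a::comm_ring_1) \<Rightarrow> (nat \<Rightarrow> 'a) \<Rightarrow> int \<Rightarrow> 'a" where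
  "alpha k s x y r = alpha0 (\<lambda>i. per k x (s + i)) (\<lambda>i. per k y (s + i)) r"

definition beta :: "nat \<Rightarrow> (nat \<Rightarrow> 'a::comm_ring_1) \<Rightarrow> (nat \<Rightarrow> 'a) \<Rightarrow> nat \<Rightarrow> 'a" where
  "beta k x y r = beta0 k (per k x) (per k y) r"

end

theory Submission
  imports Defs
begin

fun Kp :: "(nat \<Rightarrow> 'a::comm_ring_1) \<Rightarrow> (nat \<Rightarrow> 'a) \<Rightarrow> nat \<Rightarrow> 'a" where
  "Kp X Y 0 = 0"
| "Kp X Y (Suc 0) = 1"
| "Kp X Y (Suc (Suc m)) = X (m+1) * Kp X Y (m+1) + Y m * Kp X Y m"

definition AA :: "nat \<Rightarrow> nat \<Rightarrow> nat set set" where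
  "AA s n = {S. S \<subseteq> {s+1..<s+n} \<and> noncons S}"

definition TT :: "(nat \<Rightarrow> 'a::comm_ring_1) \<Rightarrow> (nat \<Rightarrow> 'a) \<Rightarrow> nat \<Rightarrow> nat \<Rightarrow> nat set \<Rightarrow> 'a" where
  "TT X Y s n S = (\<Prod>i\<in>S. Y i) * (\<Prod>j\<in>{s+1..s+n} - (S \<union> Suc ` S). X j)"

lemma AA_fin: "finite (AA s n)"
  unfolding AA_def by (rule finite_subset[of _ "Pow {s+1..<s+n}"]) auto

lemma AA_split: "AA s (n+2) = AA s (n+1) \<union> insert (s+n+1) ` AA s n"
proof
  show "AA s (n+2) \<subseteq> AA s (n+1) \<union> insert (s+n+1) ` AA s n"
  proof
    fix S assume S: "S \<in> AA s (n+2)"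
    show "S \<in> AA s (n+1) \<union> insert (s+n+1) ` AA s n"
    proof (cases "s+n+1 \<in> S")
      case True
      have "s+n \<notin> S" using S True unfolding AA_def noncons_def by auto
      have "S \<subseteq> {s+1..<s+n+2}" using S unfolding AA_def by simp
      have "S - {s+n+1} \<subseteq> {s+1..<s+n}"
      proof
        fix z assume z: "z \<in> S - {s+n+1}"
        hence "s+1 \<le> z" "z < s+n+2" "z \<noteq> s+n+1" "z \<noteq> s+n"
          using \<open>S \<subseteq> {s+1..<s+n+2}\<close> \<open>s+n \<notin> S\<close> by auto
        thus "z \<in> {s+1..<s+n}" by simp
      qed
      hence "S - {s+n+1} \<in> AA s n" using S unfolding AA_def noncons_def by auto
      moreover have "S = insert (s+n+1) (S - {s+n+1})" using True by auto
      ultimately show ?thesis by blast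
    next
      case False
      have "S \<subseteq> {s+1..<s+n+2}" using S unfolding AA_def by simp
      have "S \<subseteq> {s+1..<s+(n+1)}"
      proof
        fix z assume z: "z \<in> S"
        hence "s+1 \<le> z" "z < s+n+2" "z \<noteq> s+n+1"
          using \<open>S \<subseteq> {s+1..<s+n+2}\<close> False by auto
        thus "z \<in> {s+1..<s+(n+1)}" by simp
      qed
      hence "S \<in> AA s (n+1)" using S unfolding AA_def by auto
      thus ?thesis by blast
    qed
  qed
next
  show "AA s (n+1) \<union> insert (s+n+1) ` AA s n \<subseteq> AA s (n+2)"
  proof
    fix S assume "S \<in> AA s (n+1) \<union> insert (s+n+1) ` AA s n"
    thus "S \<in> AA s (n+2)"
    proof
      assume "S \<in> AA s (n+1)" thus ?thesis unfolding AA_def by auto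
    next
      assume "S \<in> insert (s+n+1) ` AA s n"
      then obtain T where T: "T \<in> AA s n" and ST: "S = insert (s+n+1) T" by blast
      have sub: "T \<subseteq> {s+1..<s+n}" and nc: "noncons T" using T unfolding AA_def by auto
      have "S \<subseteq> {s+1..<s+(n+2)}" using sub ST by auto
      moreover have "noncons S"
        unfolding noncons_def
      proof
        fix i assume i: "i \<in> S"
        show "Suc i \<notin> S"
        proof (cases "i = s+n+1")
          case True thus ?thesis using ST sub by auto
        next
          case False
          hence "i \<in> T" using i ST by auto
          hence "Suc i \<notin> T" "i < s+n" using nc sub unfolding noncons_def by auto
          thus ?thesis using ST by auto
        qed
      qed
      ultimately show ?thesis unfolding AA_def by blast
    qed
  qed
qed

lemma AA_disj: "AA s (n+1) \<inter> insert (s+n+1) ` AA s n = {}"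
  unfolding AA_def by auto

lemma TT1: "S \<in> AA s (n+1) \<Longrightarrow> TT X Y s (n+2) S = X (s+n+2) * TT X Y s (n+1) S"
proof -
  assume S: "S \<in> AA s (n+1)"
  have "{s+1..s+(n+2)} - (S \<union> Suc ` S) = insert (s+n+2) ({s+1..s+(n+1)} - (S \<union> Suc ` S))"
    using S unfolding AA_def by auto
  moreover have "s+n+2 \<notin> {s+1..s+(n+1)} - (S \<union> Suc ` S)" by auto
  ultimately show ?thesis unfolding TT_def by (simp add: algebra_simps)
qed

lemma TT2: "S \<in> AA s n \<Longrightarrow> TT X Y s (n+2) (insert (s+n+1) S) = Y (s+n+1) * TT X Y s n S"
proof -
  assume S: "S \<in> AA s n"
  have nin: "s+n+1 \<notin> S" using S unfolding AA_def by auto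
  have fS: "finite S" using S unfolding AA_def by (auto intro: finite_subset)
  have "{s+1..s+(n+2)} - (insert (s+n+1) S \<union> Suc ` insert (s+n+1) S) = {s+1..s+n} - (S \<union> Suc ` S)"
    using S unfolding AA_def by auto
  thus ?thesis unfolding TT_def using nin fS by (simp add: algebra_simps)
qed

lemma sum_Kp: "sum (TT X Y s n) (AA s n) = Kp (\<lambda>i. X (s+i)) (\<lambda>i. Y (s+i)) (Suc n)
   \<and> sum (TT X Y s (n+1)) (AA s (n+1)) = Kp (\<lambda>i. X (s+i)) (\<lambda>i. Y (s+i)) (Suc (n+1))"
proof (induction n)
  case 0
  have a0: "AA s 0 = {{}}" and a1: "AA s (Suc 0) = {{}}" unfolding AA_def noncons_def by auto
  show ?case by (simp add: a0 a1 TT_def)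
next
  case (Suc n)
  have inj: "inj_on (insert (s+n+1)) (AA s n)"
  proof (rule inj_onI)
    fix A B assume "A \<in> AA s n" "B \<in> AA s n" "insert (s+n+1) A = insert (s+n+1) B"
    moreover have "s+n+1 \<notin> A" "s+n+1 \<notin> B" using calculation unfolding AA_def by auto
    ultimately show "A = B" by (metis Diff_insert_absorb)
  qed
  have "sum (TT X Y s (n+2)) (AA s (n+2)) =
        sum (TT X Y s (n+2)) (AA s (n+1)) + sum (TT X Y s (n+2)) (insert (s+n+1) ` AA s n)"
    unfolding AA_split by (rule sum.union_disjoint[OF AA_fin finite_imageI[OF AA_fin] AA_disj])
  also have "sum (TT X Y s (n+2)) (AA s (n+1)) = X (s+n+2) * sum (TT X Y s (n+1)) (AA s (n+1))"
    unfolding sum_distrib_left by (rule sum.cong[OF refl]) (rule TT1)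
  also have "sum (TT X Y s (n+2)) (insert (s+n+1) ` AA s n) = Y (s+n+1) * sum (TT X Y s n) (AA s n)"
    unfolding sum.reindex[OF inj] sum_distrib_left by (rule sum.cong[OF refl]) (simp only: comp_def TT2)
  finally show ?case using Suc by (simp add: algebra_simps)
qed

lemma alpha0_Kp: "alpha0 X Y (int n) = Kp X Y (Suc n)"
proof -
  have "alpha0 X Y (int n) = sum (TT X Y 0 n) (AA 0 n)"
    unfolding alpha0_def TT_def AA_def by simp
  thus ?thesis using sum_Kp[of X Y 0 n] by simp
qed

lemma alpha_Kp: "alpha k s x y (int m - 1) = Kp (\<lambda>i. per k x (s+i)) (\<lambda>i. per k y (s+i)) m"
proof (cases m)
  case 0 thus ?thesis by (simp add: alpha_def alpha0_def)
next
  case (Suc n)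
  hence "int m - 1 = int n" by simp
  thus ?thesis unfolding alpha_def using alpha0_Kp Suc by simp
qed

lemma beta0_Kp: "beta0 k X Y (n+2) = Y k * Kp (\<lambda>i. X (1+i)) (\<lambda>i. Y (1+i)) (Suc n)"
proof -
  have e1: "{2..n+2-2} = {1+1..<1+n}" by auto
  have e2: "{2..n+2-1} = {1+1..1+n}" by auto
  have "beta0 k X Y (n+2) = (\<Sum>S\<in>AA 1 n. Y k * TT X Y 1 n S)"
    unfolding beta0_def TT_def AA_def e1 e2 by (simp add: mult.assoc)
  also have "\<dots> = Y k * sum (TT X Y 1 n) (AA 1 n)" by (simp add: sum_distrib_left)
  finally show ?thesis using sum_Kp[of X Y 1 n] by simp
qed

lemma beta_Kp: "m \<ge> 1 \<Longrightarrow> beta k x y m = per k y k * Kp (\<lambda>i. per k x (1+i)) (\<lambda>i. per k y (1+i)) (m - 1)"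
proof -
  assume m: "m \<ge> 1"
  show ?thesis
  proof (cases "m = 1")
    case True thus ?thesis by (simp add: beta_def beta0_def)
  next
    case False
    define n where "n = m - 2"
    have n: "m = n + 2" using m False unfolding n_def by simp
    show ?thesis unfolding beta_def n using beta0_Kp[of k "per k x" "per k y" n] by simp
  qed
qed

lemma alg1: "(p2::'a::comm_ring_1) = a*p1 + b*p0 \<Longrightarrow> q2 = a*q1 + b*q0 \<Longrightarrow> p2*q1 - p1*q2 = -b*(p1*q0 - p0*q1)"
  by (simp add: algebra_simps)

lemma alg2: "(p2::'a::comm_ring_1) = a*p1 + b*p0 \<Longrightarrow> q2 = a*q1 + b*q0 \<Longrightarrow> p2*c - d*q2 = a*(p1*c - d*q1) + b*(p0*c - d*q0)"
  by (simp add: algebra_simps)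

lemma detF: "Kp X Y (Suc (Suc r)) * Kp (\<lambda>i. X (1+i)) (\<lambda>i. Y (1+i)) r
   - Kp X Y (Suc r) * Kp (\<lambda>i. X (1+i)) (\<lambda>i. Y (1+i)) (Suc r) = (-1)^(r+1) * (\<Prod>i\<in>{1..r}. Y i)"
proof (induction r)
  case 0 thus ?case by simp
next
  case (Suc r)
  let ?P = "Kp X Y" and ?Q = "Kp (\<lambda>i. X (1+i)) (\<lambda>i. Y (1+i))"
  have a: "?P (Suc (Suc (Suc r))) = X (Suc (Suc r)) * ?P (Suc (Suc r)) + Y (Suc r) * ?P (Suc r)"
    by simp
  have b: "?Q (Suc (Suc r)) = X (Suc (Suc r)) * ?Q (Suc r) + Y (Suc r) * ?Q r"
    by simp
  have c: "(\<Prod>i\<in>{1..Suc r}. Y i) = Y (Suc r) * (\<Prod>i\<in>{1..r}. Y i)"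
    by (simp add: atLeastAtMostSuc_conv mult.commute)
  have "?P (Suc (Suc (Suc r))) * ?Q (Suc r) - ?P (Suc (Suc r)) * ?Q (Suc (Suc r))
      = - Y (Suc r) * (?P (Suc (Suc r)) * ?Q r - ?P (Suc r) * ?Q (Suc r))"
    by (rule alg1[OF a b])
  also have "\<dots> = - Y (Suc r) * ((-1)^(r+1) * (\<Prod>i\<in>{1..r}. Y i))" using Suc.IH by simp
  also have "\<dots> = (-1)^(Suc r+1) * (\<Prod>i\<in>{1..Suc r}. Y i)" unfolding c by (simp add: algebra_simps)
  finally show ?case .
qed

lemma main_id:
  assumes "r \<le> n"
  shows "Kp X Y (n+1) * Kp (\<lambda>i. X (1+i)) (\<lambda>i. Y (1+i)) r
   - Kp X Y (r+1) * Kp (\<lambda>i. X (1+i)) (\<lambda>i. Y (1+i)) n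
   = (-1)^(r+1) * (\<Prod>i\<in>{1..r}. Y i) * Kp (\<lambda>i. X (r+1+i)) (\<lambda>i. Y (r+1+i)) (n - r)"
proof -
  let ?P = "Kp X Y" and ?Q = "Kp (\<lambda>i. X (1+i)) (\<lambda>i. Y (1+i))"
    and ?R = "Kp (\<lambda>i. X (r+1+i)) (\<lambda>i. Y (r+1+i))" and ?c = "(-1)^(r+1) * (\<Prod>i\<in>{1..r}. Y i) :: 'a"
  define D where "D n = ?P (Suc n) * ?Q r - ?P (Suc r) * ?Q n" for n
  have "D (r+j) = ?c * ?R j \<and> D (Suc (r+j)) = ?c * ?R (Suc j)" for j
  proof (induction j)
    case 0
    show ?case using detF[of X Y r] by (simp add: D_def)
  next
    case (Suc j)
    have a: "?P (Suc (Suc (Suc (r+j)))) = X (Suc (Suc (r+j))) * ?P (Suc (Suc (r+j))) + Y (Suc (r+j)) * ?P (Suc (r+j))"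
      by simp
    have b: "?Q (Suc (Suc (r+j))) = X (Suc (Suc (r+j))) * ?Q (Suc (r+j)) + Y (Suc (r+j)) * ?Q (r+j)"
      by simp
    have c: "?R (Suc (Suc j)) = X (Suc (Suc (r+j))) * ?R (Suc j) + Y (Suc (r+j)) * ?R j"
      by simp
    have "D (Suc (Suc (r+j))) = X (Suc (Suc (r+j))) * D (Suc (r+j)) + Y (Suc (r+j)) * D (r+j)"
      unfolding D_def by (rule alg2[OF a b])
    also have "\<dots> = X (Suc (Suc (r+j))) * (?c * ?R (Suc j)) + Y (Suc (r+j)) * (?c * ?R j)"
      using Suc.IH by simp
    also have "\<dots> = ?c * (X (Suc (Suc (r+j))) * ?R (Suc j) + Y (Suc (r+j)) * ?R j)"
      by (simp add: algebra_simps del: Kp.simps)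
    also have "\<dots> = ?c * ?R (Suc (Suc j))" by (simp only: c)
    finally show ?case using Suc.IH by simp
  qed
  from this[of "n - r"] assms show ?thesis by (simp add: D_def del: Kp.simps)
qed

lemma alg3: "(A::'a::comm_ring_1)*B - C*D = s*p*E \<Longrightarrow> A*(t*B) - C*(t*D) = s*t*p*E"
proof -
  assume h: "A*B - C*D = s*p*E"
  have "A*(t*B) - C*(t*D) = t*(A*B - C*D)" by (simp add: algebra_simps)
  also have "\<dots> = s*t*p*E" unfolding h by (simp add: algebra_simps)
  finally show ?thesis .
qed

lemma per_id: "1 \<le> i \<Longrightarrow> i \<le> k \<Longrightarrow> per k x i = x i"
proof -
  assume "1 \<le> i" "i \<le> k"
  hence "(i + k - 1) mod k = i - 1"
    by (metis Nat.add_diff_assoc2 add.commute diff_less le_add_diff_inverse2 less_le_trans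
        mod_add_self2 mod_less zero_less_one)
  thus ?thesis unfolding per_def using \<open>1 \<le> i\<close> by simp
qed

theorem lemma4p2:
  fixes x y :: "nat \<Rightarrow> 'a::comm_ring_1" and k r :: nat
  assumes "k \<ge> 1" and "r \<le> k - 1"
  shows "alpha k 0 x y (int k - 1) * beta k x y (r + 1) - alpha k 0 x y (int r) * beta k x y k
         = (-1) ^ (r + 1) * y k * (\<Prod>i\<in>{1..r}. y i) * alpha k (r + 1) x y (int k - int r - 2)"
proof -
  let ?X = "per k x" and ?Y = "per k y"
  have e1: "alpha k 0 x y (int k - 1) = Kp ?X ?Y ((k-1)+1)"
    using alpha_Kp[of k 0 x y k] assms by simp
  have e2: "alpha k 0 x y (int r) = Kp ?X ?Y (r+1)"
    using alpha_Kp[of k 0 x y "r+1"] by simp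
  have e3: "alpha k (r + 1) x y (int k - int r - 2) = Kp (\<lambda>i. ?X (r+1+i)) (\<lambda>i. ?Y (r+1+i)) ((k-1) - r)"
    using alpha_Kp[of k "r+1" x y "k - 1 - r"] assms by (simp add: of_nat_diff)
  have b1: "beta k x y (r+1) = ?Y k * Kp (\<lambda>i. ?X (1+i)) (\<lambda>i. ?Y (1+i)) r"
    using beta_Kp[of "r+1" k x y] by simp
  have b2: "beta k x y k = ?Y k * Kp (\<lambda>i. ?X (1+i)) (\<lambda>i. ?Y (1+i)) (k-1)"
    using beta_Kp[of k k x y] assms by simp
  have yk: "?Y k = y k" using per_id[of k k y] assms by simp
  have pr: "(\<Prod>i\<in>{1..r}. ?Y i) = (\<Prod>i\<in>{1..r}. y i)"
    by (rule prod.cong) (use assms per_id[of _ k y] in auto)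
  have m: "Kp ?X ?Y ((k-1)+1) * Kp (\<lambda>i. ?X (1+i)) (\<lambda>i. ?Y (1+i)) r
   - Kp ?X ?Y (r+1) * Kp (\<lambda>i. ?X (1+i)) (\<lambda>i. ?Y (1+i)) (k-1)
   = (-1)^(r+1) * (\<Prod>i\<in>{1..r}. ?Y i) * Kp (\<lambda>i. ?X (r+1+i)) (\<lambda>i. ?Y (r+1+i)) ((k-1) - r)"
    by (rule main_id) (use assms in simp)
  show ?thesis unfolding e1 e2 e3 b1 b2 yk
    using m[unfolded pr] by (rule alg3)
qed

end
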